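(* Let $E\subseteq\mathbb{R}$ and let $(f_n)$ be a sequence of functions $E\to\mathbb{R}$, each Abel continuous on $E$, such that $(f_n)$ converges uniformly on $E$ to a function $f:E\to\mathbb{R}$. Then $f$ is Abel continuous on $E$.
   Context: A sequence $(p_n)_{n\ge0}$ is Abel convergent to $\ell$ if $\sum_{k=0}^{\infty}p_k x^k$ converges for every $0\le x<1$ and $\lim_{x\to 1^-}(1-x)\sum_{k=0}^{\infty}p_k x^k=\ell$. A function $g:E\to\mathbb{R}$ is Abel continuous on $E$ if for every sequence $(p_n)$ in $E$ Abel convergent to some $\ell\in E$, $(g(p_n))$ is Abel convergent to $g(\ell)$. *)

theory Defs
  imports "HOL-Analysis.Analysis"
begin

definition abel_convergent :: "(nat \<Rightarrow> real) \<Rightarrow> real \<Rightarrow> bool" where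
  "abel_convergent p l \<longleftrightarrow>
     (\<forall>x. 0 \<le> x \<and> x < 1 \<longrightarrow> summable (\<lambda>k. p k * x ^ k)) \<and>
     ((\<lambda>x. (1 - x) * (\<Sum>k. p k * x ^ k)) \<longlongrightarrow> l) (at_left 1)"

definition abel_continuous_on :: "real set \<Rightarrow> (real \<Rightarrow> real) \<Rightarrow> bool" where
  "abel_continuous_on E g \<longleftrightarrow>
     (\<forall>p l. (\<forall>n. p n \<in> E) \<longrightarrow> l \<in> E \<longrightarrow> abel_convergent p l \<longrightarrow>
        abel_convergent (\<lambda>n. g (p n)) (g l))"

end

theory Submission
  imports Defs
begin

lemma bdd_abel:
  fixes d :: "nat \<Rightarrow> real"
  assumes B: "\<And>k. \<bar>d k\<bar> \<le> B" and x: "0 \<le> x" "x < 1"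
  shows "summable (\<lambda>k. d k * x ^ k)" and "\<bar>(1 - x) * (\<Sum>k. d k * x ^ k)\<bar> \<le> B"
proof -
  have g: "summable (\<lambda>k. B * x ^ k)" using x by (intro summable_mult summable_geometric) auto
  have n: "\<And>k. norm (d k * x ^ k) \<le> B * x ^ k"
    using B x by (simp add: abs_mult mult_right_mono)
  show s: "summable (\<lambda>k. d k * x ^ k)"
    by (rule summable_comparison_test[OF _ g]) (use n in auto)
  have sn: "summable (\<lambda>k. norm (d k * x ^ k))"
    by (rule summable_comparison_test[OF _ g]) (use n in auto)
  have "\<bar>\<Sum>k. d k * x ^ k\<bar> \<le> (\<Sum>k. norm (d k * x ^ k))"
    using summable_norm[OF sn] by simp
  also have "\<dots> \<le> (\<Sum>k. B * x ^ k)" by (rule suminf_le[OF n sn g])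
  also have "\<dots> = B / (1 - x)" using x by (simp add: suminf_mult suminf_geometric)
  finally have "\<bar>\<Sum>k. d k * x ^ k\<bar> \<le> B / (1 - x)" .
  then have "(1 - x) * \<bar>\<Sum>k. d k * x ^ k\<bar> \<le> B"
    using x by (simp add: field_simps)
  then show "\<bar>(1 - x) * (\<Sum>k. d k * x ^ k)\<bar> \<le> B" using x by (simp add: abs_mult)
qed

theorem theorem8:
  fixes E :: "real set" and fs :: "nat \<Rightarrow> real \<Rightarrow> real" and f :: "real \<Rightarrow> real"
  assumes "\<And>n. abel_continuous_on E (fs n)"
    and "uniform_limit E fs f sequentially"
  shows "abel_continuous_on E f"
  unfolding abel_continuous_on_def
proof (intro allI impI)
  fix p l
  assume pE: "\<forall>n. p n \<in> E" and lE: "l \<in> E" and pl: "abel_convergent p l"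
  have U: "\<And>e. e > 0 \<Longrightarrow> \<exists>N. \<forall>y\<in>E. \<bar>fs N y - f y\<bar> < e"
  proof -
    fix e :: real assume "e > 0"
    then have "\<forall>\<^sub>F n in sequentially. \<forall>y\<in>E. dist (fs n y) (f y) < e"
      using assms(2) by (simp add: uniform_limit_iff)
    then obtain N where "\<forall>n\<ge>N. \<forall>y\<in>E. dist (fs n y) (f y) < e"
      unfolding eventually_sequentially by blast
    then have "\<forall>y\<in>E. dist (fs N y) (f y) < e" by blast
    then show "\<exists>N. \<forall>y\<in>E. \<bar>fs N y - f y\<bar> < e" by (auto simp: dist_real_def)
  qed
  have AN: "\<And>N. abel_convergent (\<lambda>n. fs N (p n)) (fs N l)"
    using assms(1) pE lE pl unfolding abel_continuous_on_def by blast
  obtain N0 where N0: "\<forall>y\<in>E. \<bar>fs N0 y - f y\<bar> < 1" using U[of 1] by auto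
  have summ: "summable (\<lambda>k. f (p k) * x ^ k)" if x: "0 \<le> x" "x < 1" for x
  proof -
    have s1: "summable (\<lambda>k. fs N0 (p k) * x ^ k)" using AN[of N0] x unfolding abel_convergent_def by auto
    have s2: "summable (\<lambda>k. (f (p k) - fs N0 (p k)) * x ^ k)"
      by (rule bdd_abel(1)[of _ 1]) (use N0 pE x in \<open>auto simp: abs_minus_commute less_imp_le\<close>)
    have "summable (\<lambda>k. fs N0 (p k) * x ^ k + (f (p k) - fs N0 (p k)) * x ^ k)"
      using summable_add[OF s1 s2] .
    then show ?thesis by (simp add: algebra_simps)
  qed
  have lim: "((\<lambda>x. (1 - x) * (\<Sum>k. f (p k) * x ^ k)) \<longlongrightarrow> f l) (at_left 1)"
    unfolding tendsto_iff
  proof (intro allI impI)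
    fix e :: real assume e: "e > 0"
    obtain N where N: "\<forall>y\<in>E. \<bar>fs N y - f y\<bar> < e/3" using U[of "e/3"] e by auto
    have "((\<lambda>x. (1 - x) * (\<Sum>k. fs N (p k) * x ^ k)) \<longlongrightarrow> fs N l) (at_left 1)"
      using AN[of N] unfolding abel_convergent_def by auto
    then have ev1: "\<forall>\<^sub>F x in at_left 1. dist ((1 - x) * (\<Sum>k. fs N (p k) * x ^ k)) (fs N l) < e/3"
      using e unfolding tendsto_iff by (meson divide_pos_pos zero_less_numeral)
    have ev2: "\<forall>\<^sub>F x in at_left (1::real). 0 \<le> x \<and> x < 1"
      using eventually_at_left_real[of 0 1] by (auto elim: eventually_mono)
    show "\<forall>\<^sub>F x in at_left 1. dist ((1 - x) * (\<Sum>k. f (p k) * x ^ k)) (f l) < e"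
      using ev1 ev2
    proof eventually_elim
      case (elim x)
      then have x: "0 \<le> x" "x < 1" by auto
      have s1: "summable (\<lambda>k. fs N (p k) * x ^ k)" using AN[of N] x unfolding abel_convergent_def by auto
      have B: "\<And>k. \<bar>f (p k) - fs N (p k)\<bar> \<le> e/3"
        using N pE by (metis abs_minus_commute less_imp_le)
      have s2: "summable (\<lambda>k. (f (p k) - fs N (p k)) * x ^ k)" by (rule bdd_abel(1)[OF B x])
      have h: "\<bar>(1 - x) * (\<Sum>k. (f (p k) - fs N (p k)) * x ^ k)\<bar> \<le> e/3" by (rule bdd_abel(2)[OF B x])
      have "(\<Sum>k. f (p k) * x ^ k) = (\<Sum>k. fs N (p k) * x ^ k + (f (p k) - fs N (p k)) * x ^ k)"
        by (simp add: algebra_simps)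
      also have "\<dots> = (\<Sum>k. fs N (p k) * x ^ k) + (\<Sum>k. (f (p k) - fs N (p k)) * x ^ k)"
        by (rule suminf_add[OF s1 s2, symmetric])
      finally have eq: "(1 - x) * (\<Sum>k. f (p k) * x ^ k) = (1 - x) * (\<Sum>k. fs N (p k) * x ^ k) + (1 - x) * (\<Sum>k. (f (p k) - fs N (p k)) * x ^ k)"
        by (simp add: algebra_simps)
      have "\<bar>fs N l - f l\<bar> < e/3" using N lE by auto
      then show ?case using elim h unfolding eq dist_real_def by linarith
    qed
  qed
  show "abel_convergent (\<lambda>n. f (p n)) (f l)"
    unfolding abel_convergent_def using summ lim by auto
qed

end
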